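(* Let $X$ be a vector space, let $0<\beta\le1$, and let $Y$ be a $\beta$-homogeneous complex Banach space with $F$-norm $\|\cdot\|$. Let $\varepsilon>0$ and let $\phi: X\to Y$ be a mapping with $\phi(0)=0$ and $$\big\|\phi(x+y-z)+\phi(x+z-y)+\phi(y+z-x)-\phi(x-y)-\phi(x-z)-\phi(z-y)-\phi(x)-\phi(y)-\phi(z)\big\|\le\varepsilon$$ for all $x,y,z\in X$. Then there exists a unique quadratic mapping $h: X\to Y$ such that $$\|\phi(x)-h(x)\|\le\frac{\varepsilon}{4^\beta-1}\quad\text{for all }x\in X.$$
   Context: An $F$-norm on a complex linear space $Y$ is a map $\|\cdot\|: Y\to[0,\infty)$ such that: $\|u\|=0$ iff $u=0$; $\|\lambda u\|=\|u\|$ whenever $|\lambda|=1$; $\|u+v\|\le\|u\|+\|v\|$; $\|\lambda_n u\|\to0$ implies $\lambda_n\to0$; $\|\lambda u_n\|\to 0$ implies $u_n\to0$. With $d(u,v)=\|u-v\|$, $Y$ is an $F$-space if $d$ is complete. The $F$-norm is $\beta$-homogeneous ($\beta>0$) if $\|\lambda u\|=|\lambda|^\beta\|u\|$ for all $u\in Y$, $\lambda\in\mathbb{C}$; a $\beta$-homogeneous Banach space is a $\beta$-homogeneous $F$-space. A mapping $h: X\to Y$ is quadratic if $h(x+y)+h(x-y)=2h(x)+2h(y)$ for all $x,y\in X$. *)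

theory Defs
  imports "HOL-Analysis.Analysis"
begin

text \<open>A complex linear space is modelled as a type 'b of class ab_group_add together
  with a complex scalar multiplication smul satisfying the module axioms
  (locale module from HOL.Modules).

  The two "limit"
  axioms are read with the non-degeneracy side conditions u \<noteq> 0 and
  c \<noteq> 0 (otherwise they are unsatisfiable); convergence u_n to 0 is in
  the metric d(u,v) = nrm (u - v).\<close>

definition F_norm :: "(complex \<Rightarrow> 'b::ab_group_add \<Rightarrow> 'b) \<Rightarrow> ('b \<Rightarrow> real) \<Rightarrow> bool" where
  "F_norm smul nrm \<longleftrightarrow>
     (\<forall>u. nrm u \<ge> 0) \<and>
     (\<forall>u. nrm u = 0 \<longleftrightarrow> u = 0) \<and>
     (\<forall>c u. cmod c = 1 \<longrightarrow> nrm (smul c u) = nrm u) \<and>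
     (\<forall>u v. nrm (u + v) \<le> nrm u + nrm v) \<and>
     (\<forall>(c::nat \<Rightarrow> complex) u. u \<noteq> 0 \<longrightarrow>
          (\<lambda>n. nrm (smul (c n) u)) \<longlonglongrightarrow> 0 \<longrightarrow> c \<longlonglongrightarrow> 0) \<and>
     (\<forall>(c::complex) (u::nat \<Rightarrow> 'b). c \<noteq> 0 \<longrightarrow>
          (\<lambda>n. nrm (smul c (u n))) \<longlonglongrightarrow> 0 \<longrightarrow> (\<lambda>n. nrm (u n)) \<longlonglongrightarrow> 0)"

definition F_complete :: "('b::ab_group_add \<Rightarrow> real) \<Rightarrow> bool" where
  "F_complete nrm \<longleftrightarrow>
     (\<forall>u::nat \<Rightarrow> 'b. (\<forall>e>0. \<exists>N. \<forall>m\<ge>N. \<forall>n\<ge>N. nrm (u m - u n) < e) \<longrightarrow>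
        (\<exists>l. (\<lambda>n. nrm (u n - l)) \<longlonglongrightarrow> 0))"

definition beta_homogeneous ::
  "real \<Rightarrow> (complex \<Rightarrow> 'b::ab_group_add \<Rightarrow> 'b) \<Rightarrow> ('b \<Rightarrow> real) \<Rightarrow> bool" where
  "beta_homogeneous \<beta> smul nrm \<longleftrightarrow> (\<forall>c u. nrm (smul c u) = cmod c powr \<beta> * nrm u)"

definition beta_homogeneous_Banach ::
  "real \<Rightarrow> (complex \<Rightarrow> 'b::ab_group_add \<Rightarrow> 'b) \<Rightarrow> ('b \<Rightarrow> real) \<Rightarrow> bool" where
  "beta_homogeneous_Banach \<beta> smul nrm \<longleftrightarrow>
     module smul \<and> F_norm smul nrm \<and> F_complete nrm \<and> beta_homogeneous \<beta> smul nrm"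

definition quadratic_map ::
  "(complex \<Rightarrow> 'b::ab_group_add \<Rightarrow> 'b) \<Rightarrow> ('a::ab_group_add \<Rightarrow> 'b) \<Rightarrow> bool" where
  "quadratic_map smul h \<longleftrightarrow>
     (\<forall>x y. h (x + y) + h (x - y) = smul 2 (h x) + smul 2 (h y))"

end

theory Submission
  imports Defs
begin

lemma alg_tele: "(q::real) > 1 \<Longrightarrow> e*(B - A)/(q-1) + e*A/q = e*(B - A/q)/(q-1)"
  by (simp add: field_simps)

lemma grp_id: "(hp::'c::ab_group_add) + hm - s1 - s2 = (ap + am - t1 - t2) + (hp - ap) + (hm - am) + (t1 - s1) + (t2 - s2)"
  by (simp add: algebra_simps)

lemma le_of_tendsto0:
  fixes c B :: real
  assumes "\<And>n. c \<le> B + t n" and "t \<longlonglongrightarrow> 0"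
  shows "c \<le> B"
proof -
  have "(\<lambda>n. B + t n) \<longlonglongrightarrow> B + 0" by (intro tendsto_intros assms(2))
  then show ?thesis using assms(1) by (intro LIMSEQ_le_const) auto
qed

context
  fixes smul :: "complex \<Rightarrow> 'b::ab_group_add \<Rightarrow> 'b" and nrm :: "'b \<Rightarrow> real" and \<beta> :: real
  assumes BB: "beta_homogeneous_Banach \<beta> smul nrm" and bpos: "0 < \<beta>"
begin

lemma mod': "module smul" using BB unfolding beta_homogeneous_Banach_def by auto

interpretation M: module smul by (rule mod')

lemma nn: "nrm u \<ge> 0" using BB unfolding beta_homogeneous_Banach_def F_norm_def by auto
lemma nz: "nrm u = 0 \<longleftrightarrow> u = 0" using BB unfolding beta_homogeneous_Banach_def F_norm_def by auto
lemma tri: "nrm (u + v) \<le> nrm u + nrm v" using BB unfolding beta_homogeneous_Banach_def F_norm_def by auto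
lemma hom: "nrm (smul c u) = cmod c powr \<beta> * nrm u"
  using BB unfolding beta_homogeneous_Banach_def beta_homogeneous_def by auto
lemma compl: "(\<forall>e>0. \<exists>N. \<forall>m\<ge>N. \<forall>n\<ge>N. nrm (u m - u n) < e) \<Longrightarrow> (\<exists>l. (\<lambda>n. nrm (u n - l)) \<longlonglongrightarrow> 0)"
  using BB unfolding beta_homogeneous_Banach_def F_complete_def by auto

lemma smul2: "smul 2 u = u + u"
  using M.scale_left_distrib[of 1 1 u] by simp

lemma smul4: "smul 4 u = u + u + u + u"
  using M.scale_left_distrib[of 2 2 u] by (simp add: smul2)

lemma nneg: "nrm (- u) = nrm u"
proof -
  have "nrm (- u) = nrm (smul (-1) u)" using M.scale_minus_left[of 1 u] by simp
  also have "\<dots> = nrm u" by (subst hom) simp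
  finally show ?thesis .
qed

lemma ncomm: "nrm (u - v) = nrm (v - u)"
  using nneg[of "u - v"] by simp

lemma tri5: "nrm (a+b+c+d+e) \<le> nrm a + nrm b + nrm c + nrm d + nrm e"
  using tri[of "a+b+c+d" e] tri[of "a+b+c" d] tri[of "a+b" c] tri[of a b] by linarith

lemma tri_diff: "nrm (u - w) \<le> nrm (u - v) + nrm (v - w)"
  using tri[of "u - v" "v - w"] by simp

definition q where "q = 4 powr \<beta>"

lemma q_gt1: "q > 1" unfolding q_def using bpos by simp

lemma hom4: "nrm (smul (1 / 4 ^ n) u) = nrm u / q ^ n"
proof -
  have "cmod (1 / 4 ^ n :: complex) = 1 / 4 ^ n" by (simp add: norm_divide norm_power)
  moreover have "((1::real) / 4 ^ n) powr \<beta> = 1 / q ^ n"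
    unfolding q_def by (simp add: powr_divide powr_power[symmetric] powr_realpow[symmetric] powr_powr mult.commute)
  ultimately show ?thesis by (simp add: hom)
qed


lemma nrm0: "nrm 0 = 0" using nz by simp

lemma q_pos: "q > 0" using q_gt1 by simp

lemma qpow0: "(\<lambda>n. c / q ^ n) \<longlonglongrightarrow> 0"
proof -
  have "(\<lambda>n. c * inverse (q ^ n)) \<longlonglongrightarrow> c * 0"
    by (intro tendsto_intros LIMSEQ_inverse_realpow_zero q_gt1)
  then show ?thesis by (simp add: divide_inverse)
qed

lemma quad_scale:
  fixes h :: "'a::real_vector \<Rightarrow> 'b"
  assumes "quadratic_map smul h"
  shows "h x = smul (1 / 4 ^ n) (h ((2 ^ n) *\<^sub>R x))"
proof -
  have qq: "\<And>x y. h (x + y) + h (x - y) = smul 2 (h x) + smul 2 (h y)"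
    using assms unfolding quadratic_map_def by auto
  have "h 0 + h 0 = (h 0 + h 0) + (h 0 + h 0)" using qq[of 0 0] by (simp add: smul2)
  then have "h 0 + h 0 = 0" by (metis add_cancel_right_right)
  then have "smul (1/2) (smul 2 (h 0)) = 0" by (simp add: smul2)
  then have h0: "h 0 = 0" by simp
  have dbl: "h (2 *\<^sub>R y) = smul 4 (h y)" for y
    using qq[of y y] h0 by (simp add: smul2 smul4 scaleR_2 add.assoc)
  show ?thesis
  proof (induction n)
    case 0 then show ?case by simp
  next
    case (Suc n)
    have "h ((2 ^ Suc n) *\<^sub>R x) = smul 4 (h ((2 ^ n) *\<^sub>R x))"
      using dbl[of "(2 ^ n) *\<^sub>R x"] by (simp add: mult.commute)
    then have "smul (1 / 4 ^ Suc n) (h ((2 ^ Suc n) *\<^sub>R x)) = smul (1 / 4 ^ n) (h ((2 ^ n) *\<^sub>R x))"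
      by simp
    then show ?case using Suc by simp
  qed
qed

context
  fixes \<phi> :: "'a::real_vector \<Rightarrow> 'b" and \<epsilon> :: real
  assumes p0: "\<phi> 0 = 0" and epos: "\<epsilon> > 0"
    and SS: "\<And>x y z. nrm (\<phi> (x + y - z) + \<phi> (x + z - y) + \<phi> (y + z - x)
                     - \<phi> (x - y) - \<phi> (x - z) - \<phi> (z - y) - \<phi> x - \<phi> y - \<phi> z) \<le> \<epsilon>"
begin

lemma dblp: "nrm (\<phi> (2 *\<^sub>R t) - smul 4 (\<phi> t)) \<le> \<epsilon>"
proof -
  have "\<phi> (t + 0 - t) + \<phi> (t + t - 0) + \<phi> (0 + t - t) - \<phi> (t - 0) - \<phi> (t - t) - \<phi> (t - 0) - \<phi> t - \<phi> 0 - \<phi> t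
     = \<phi> (2 *\<^sub>R t) - smul 4 (\<phi> t)" by (simp add: p0 smul4 scaleR_2 algebra_simps)
  then show ?thesis using SS[of t 0 t] by simp
qed

definition E where "E x y z = \<phi> (x + y - z) + \<phi> (x + z - y) + \<phi> (y + z - x)
                     - \<phi> (x - y) - \<phi> (x - z) - \<phi> (z - y) - \<phi> x - \<phi> y - \<phi> z"

lemma Qp: "nrm (\<phi> (x + y) + \<phi> (x - y) - smul 2 (\<phi> x) - smul 2 (\<phi> y)) \<le> 3 * \<epsilon>"
proof -
  have "\<phi> (x + y) + \<phi> (x - y) - smul 2 (\<phi> x) - smul 2 (\<phi> y) = E x y 0 - E (x - y) 0 0 + E y 0 0"
    unfolding E_def by (simp add: p0 smul2 algebra_simps)
  also have "nrm \<dots> \<le> nrm (E x y 0) + nrm (E (x - y) 0 0) + nrm (E y 0 0)"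
    using tri[of "E x y 0 - E (x - y) 0 0" "E y 0 0"] tri[of "E x y 0" "- E (x - y) 0 0"]
    by (simp add: nneg)
  also have "\<dots> \<le> 3 * \<epsilon>" using SS[of x y 0] SS[of "x - y" 0 0] SS[of y 0 0] unfolding E_def by simp
  finally show ?thesis .
qed

definition a where "a n x = smul (1 / 4 ^ n) (\<phi> ((2 ^ n) *\<^sub>R x))"

lemma a0: "a 0 x = \<phi> x" unfolding a_def by simp

lemma astep: "nrm (a n x - a (Suc n) x) \<le> \<epsilon> / q ^ Suc n"
proof -
  let ?u = "\<phi> ((2 ^ n) *\<^sub>R x)"
  have "a n x = smul (1 / 4 ^ Suc n) (smul 4 ?u)" unfolding a_def by simp
  moreover have "a (Suc n) x = smul (1 / 4 ^ Suc n) (\<phi> (2 *\<^sub>R (2 ^ n) *\<^sub>R x))"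
    unfolding a_def by (simp add: mult.commute)
  ultimately have "a n x - a (Suc n) x = smul (1 / 4 ^ Suc n) (smul 4 ?u - \<phi> (2 *\<^sub>R (2 ^ n) *\<^sub>R x))"
    by (simp add: M.scale_right_diff_distrib)
  then have "nrm (a n x - a (Suc n) x) = nrm (smul 4 ?u - \<phi> (2 *\<^sub>R (2 ^ n) *\<^sub>R x)) / q ^ Suc n"
    by (simp only: hom4)
  also have "\<dots> = nrm (\<phi> (2 *\<^sub>R (2 ^ n) *\<^sub>R x) - smul 4 ?u) / q ^ Suc n"
    by (metis ncomm)
  also have "\<dots> \<le> \<epsilon> / q ^ Suc n" using dblp[of "(2 ^ n) *\<^sub>R x"] q_pos
    by (simp add: divide_right_mono)
  finally show ?thesis .
qed

lemma tele: "nrm (a n x - a (n + k) x) \<le> \<epsilon> * (1 / q ^ n - 1 / q ^ (n + k)) / (q - 1)"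
proof (induction k)
  case 0 then show ?case by (simp add: nrm0)
next
  case (Suc k)
  have "nrm (a n x - a (n + Suc k) x) \<le> nrm (a n x - a (n + k) x) + nrm (a (n + k) x - a (Suc (n + k)) x)"
    using tri_diff by simp
  also have "\<dots> \<le> \<epsilon> * (1 / q ^ n - 1 / q ^ (n + k)) / (q - 1) + \<epsilon> / q ^ Suc (n + k)"
    using Suc astep by (intro add_mono) auto
  also have "\<dots> = \<epsilon> * (1 / q ^ n - 1 / q ^ (n + k)) / (q - 1) + \<epsilon> * (1 / q ^ (n + k)) / q"
    by simp
  also have "\<dots> = \<epsilon> * (1 / q ^ n - (1 / q ^ (n + k)) / q) / (q - 1)"
    by (rule alg_tele[OF q_gt1])
  also have "\<dots> = \<epsilon> * (1 / q ^ n - 1 / q ^ (n + Suc k)) / (q - 1)"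
    by simp
  finally show ?case .
qed

lemma abound: "m \<ge> n \<Longrightarrow> nrm (a n x - a m x) \<le> \<epsilon> / (q ^ n * (q - 1))"
proof -
  assume "m \<ge> n"
  then obtain k where m: "m = n + k" by (metis le_add_diff_inverse)
  have "nrm (a n x - a m x) \<le> \<epsilon> * (1 / q ^ n - 1 / q ^ (n + k)) / (q - 1)" using tele m by simp
  also have "\<dots> \<le> \<epsilon> * (1 / q ^ n) / (q - 1)"
    using q_gt1 epos by (intro divide_right_mono mult_left_mono) auto
  finally show ?thesis by simp
qed

lemma acauchy: "\<forall>e>0. \<exists>N. \<forall>m\<ge>N. \<forall>n\<ge>N. nrm (a m x - a n x) < e"
proof (intro allI impI)
  fix e :: real assume e: "e > 0"
  obtain N where N: "\<epsilon> / ((q - 1) * e) < q ^ N" using real_arch_pow[OF q_gt1] by blast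
  have qN: "\<epsilon> / (q ^ N * (q - 1)) < e"
    using N q_gt1 e by (simp add: field_simps)
  have b: "nrm (a n x - a m x) < e" if "m \<ge> n" "n \<ge> N" for m n
  proof -
    have "q ^ N \<le> q ^ n" using that q_gt1 by (simp add: power_increasing)
    then have "\<epsilon> / (q ^ n * (q - 1)) \<le> \<epsilon> / (q ^ N * (q - 1))"
      using q_gt1 epos by (intro divide_left_mono mult_right_mono mult_pos_pos) auto
    then show ?thesis using abound[OF that(1), of x] qN by linarith
  qed
  show "\<exists>N. \<forall>m\<ge>N. \<forall>n\<ge>N. nrm (a m x - a n x) < e"
  proof (intro exI allI impI)
    fix m n assume "m \<ge> N" "n \<ge> N"
    show "nrm (a m x - a n x) < e"
    proof (cases "m \<ge> n")
      case True then show ?thesis using b[of n m] \<open>n \<ge> N\<close> ncomm by metis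
    next
      case False then show ?thesis using b[of m n] \<open>m \<ge> N\<close> by simp
    qed
  qed
qed

definition hh where "hh x = (SOME l. (\<lambda>n. nrm (a n x - l)) \<longlonglongrightarrow> 0)"

lemma hlim: "(\<lambda>n. nrm (a n x - hh x)) \<longlonglongrightarrow> 0"
  unfolding hh_def using compl[OF acauchy] by (rule someI_ex)

lemma hbound: "nrm (\<phi> x - hh x) \<le> \<epsilon> / (q - 1)"
proof (rule le_of_tendsto0[OF _ hlim])
  fix n
  have "nrm (\<phi> x - hh x) \<le> nrm (a 0 x - a n x) + nrm (a n x - hh x)"
    using tri_diff a0 by metis
  moreover have "nrm (a 0 x - a n x) \<le> \<epsilon> / (q - 1)" using abound[of 0 n x] by simp
  ultimately show "nrm (\<phi> x - hh x) \<le> \<epsilon> / (q - 1) + nrm (a n x - hh x)" by simp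
qed

lemma aquad: "nrm (a n (x + y) + a n (x - y) - smul 2 (a n x) - smul 2 (a n y)) \<le> 3 * \<epsilon> / q ^ n"
proof -
  let ?X = "(2 ^ n) *\<^sub>R x" and ?Y = "(2 ^ n) *\<^sub>R y"
  have "a n (x + y) + a n (x - y) - smul 2 (a n x) - smul 2 (a n y)
      = smul (1 / 4 ^ n) (\<phi> (?X + ?Y) + \<phi> (?X - ?Y) - smul 2 (\<phi> ?X) - smul 2 (\<phi> ?Y))"
    unfolding a_def by (simp add: M.scale_right_diff_distrib M.scale_right_distrib scaleR_add_right
       scaleR_diff_right mult.commute)
  then show ?thesis using Qp[of ?X ?Y] q_pos by (simp add: hom4 divide_right_mono)
qed

lemma hquad: "quadratic_map smul hh"
  unfolding quadratic_map_def
proof (intro allI)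
  fix x y
  let ?D = "hh (x + y) + hh (x - y) - smul 2 (hh x) - smul 2 (hh y)"
  define t where "t = (\<lambda>n. 3 * \<epsilon> / q ^ n + nrm (a n (x + y) - hh (x + y)) + nrm (a n (x - y) - hh (x - y))
      + 2 powr \<beta> * nrm (a n x - hh x) + 2 powr \<beta> * nrm (a n y - hh y))"
  have h2: "nrm (smul 2 w) = 2 powr \<beta> * nrm w" for w by (simp add: hom)
  have "nrm ?D \<le> 0 + t n" for n
  proof -
    let ?A = "a n (x + y) + a n (x - y) - smul 2 (a n x) - smul 2 (a n y)"
    have eq: "?D = ?A + (hh (x + y) - a n (x + y)) + (hh (x - y) - a n (x - y))
        + smul 2 (a n x - hh x) + smul 2 (a n y - hh y)"
      unfolding M.scale_right_diff_distrib by (rule grp_id)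
    have le1: "nrm ?D \<le> nrm ?A + nrm (hh (x + y) - a n (x + y)) + nrm (hh (x - y) - a n (x - y))
        + nrm (smul 2 (a n x - hh x)) + nrm (smul 2 (a n y - hh y))"
      unfolding eq by (rule tri5)
    have e1: "nrm ?A \<le> 3 * \<epsilon> / q ^ n" by (rule aquad)
    have e2: "nrm (hh (x + y) - a n (x + y)) = nrm (a n (x + y) - hh (x + y))" by (rule ncomm)
    have e3: "nrm (hh (x - y) - a n (x - y)) = nrm (a n (x - y) - hh (x - y))" by (rule ncomm)
    have e4: "t n = 3 * \<epsilon> / q ^ n + nrm (a n (x + y) - hh (x + y)) + nrm (a n (x - y) - hh (x - y))
      + 2 powr \<beta> * nrm (a n x - hh x) + 2 powr \<beta> * nrm (a n y - hh y)" unfolding t_def by simp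
    show ?thesis using le1 e1 e2 e3 e4 h2[of "a n x - hh x"] h2[of "a n y - hh y"] by linarith
  qed
  moreover have "t \<longlonglongrightarrow> 0"
  proof -
    have l1: "(\<lambda>n. 3 * \<epsilon> / q ^ n) \<longlonglongrightarrow> 0" by (rule qpow0)
    have l2: "(\<lambda>n. nrm (a n (x + y) - hh (x + y))) \<longlonglongrightarrow> 0" by (rule hlim)
    have l3: "(\<lambda>n. nrm (a n (x - y) - hh (x - y))) \<longlonglongrightarrow> 0" by (rule hlim)
    have l4: "(\<lambda>n. 2 powr \<beta> * nrm (a n x - hh x)) \<longlonglongrightarrow> 0" by (rule tendsto_mult_right_zero[OF hlim])
    have l5: "(\<lambda>n. 2 powr \<beta> * nrm (a n y - hh y)) \<longlonglongrightarrow> 0" by (rule tendsto_mult_right_zero[OF hlim])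
    show ?thesis unfolding t_def
      by (rule tendsto_add_zero[OF tendsto_add_zero[OF tendsto_add_zero[OF tendsto_add_zero[OF l1 l2] l3] l4] l5])
  qed
  ultimately have "nrm ?D \<le> 0" by (rule le_of_tendsto0)
  then have "?D = 0" using nn[of ?D] nz[of ?D] by linarith
  then show "hh (x + y) + hh (x - y) = smul 2 (hh x) + smul 2 (hh y)"
    by (simp add: diff_diff_eq)
qed

lemma exists_h: "\<exists>h. quadratic_map smul h \<and> (\<forall>x. nrm (\<phi> x - h x) \<le> \<epsilon> / (4 powr \<beta> - 1))"
  using hquad hbound unfolding q_def by blast

end

lemma uniq:
  fixes h1 h2 :: "'a::real_vector \<Rightarrow> 'b"
  assumes "quadratic_map smul h1" "quadratic_map smul h2"
    and "\<And>x. nrm (\<phi> x - h1 x) \<le> B" "\<And>x. nrm (\<phi> x - h2 x) \<le> B"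
  shows "h1 = h2"
proof
  fix x
  have "nrm (h1 x - h2 x) \<le> 0 + (2 * B) / q ^ n" for n
  proof -
    let ?y = "(2 ^ n) *\<^sub>R x"
    have "h1 x - h2 x = smul (1 / 4 ^ n) (h1 ?y - h2 ?y)"
      using quad_scale[OF assms(1), of x n] quad_scale[OF assms(2), of x n]
      by (simp add: M.scale_right_diff_distrib)
    then have f1: "nrm (h1 x - h2 x) = nrm (h1 ?y - h2 ?y) / q ^ n" by (simp only: hom4)
    have f2: "nrm (h1 ?y - h2 ?y) \<le> nrm (h1 ?y - \<phi> ?y) + nrm (\<phi> ?y - h2 ?y)" by (rule tri_diff)
    have f3: "nrm (h1 ?y - \<phi> ?y) = nrm (\<phi> ?y - h1 ?y)" by (rule ncomm)
    have f4: "nrm (h1 ?y - h2 ?y) \<le> 2 * B" using f2 f3 assms(3)[of ?y] assms(4)[of ?y] by linarith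
    have "nrm (h1 ?y - h2 ?y) / q ^ n \<le> (2 * B) / q ^ n"
      using f4 q_pos by (simp add: divide_right_mono)
    then show ?thesis using f1 by simp
  qed
  then have "nrm (h1 x - h2 x) \<le> 0" by (rule le_of_tendsto0[OF _ qpow0])
  then have "h1 x - h2 x = 0" using nn[of "h1 x - h2 x"] nz[of "h1 x - h2 x"] by linarith
  then show "h1 x = h2 x" by simp
qed

end

theorem corollary4p2:
  fixes smul :: "complex \<Rightarrow> 'b::ab_group_add \<Rightarrow> 'b"
    and nrm :: "'b \<Rightarrow> real"
    and \<phi> :: "'a::real_vector \<Rightarrow> 'b"
    and \<beta> \<epsilon> :: real
  assumes "0 < \<beta>" and "\<beta> \<le> 1"
    and "beta_homogeneous_Banach \<beta> smul nrm"
    and "\<epsilon> > 0"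
    and "\<phi> 0 = 0"
    and "\<And>x y z. nrm (\<phi> (x + y - z) + \<phi> (x + z - y) + \<phi> (y + z - x)
                     - \<phi> (x - y) - \<phi> (x - z) - \<phi> (z - y) - \<phi> x - \<phi> y - \<phi> z) \<le> \<epsilon>"
  shows "\<exists>!h. quadratic_map smul h \<and> (\<forall>x. nrm (\<phi> x - h x) \<le> \<epsilon> / (4 powr \<beta> - 1))"
proof -
  obtain h where h: "quadratic_map smul h" "\<forall>x. nrm (\<phi> x - h x) \<le> \<epsilon> / (4 powr \<beta> - 1)"
    using exists_h[OF assms(3) assms(1) assms(5) assms(4) assms(6)] by blast
  show ?thesis
  proof (rule ex1I[of _ h])
    show "quadratic_map smul h \<and> (\<forall>x. nrm (\<phi> x - h x) \<le> \<epsilon> / (4 powr \<beta> - 1))" using h by blast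
  next
    fix h2 assume "quadratic_map smul h2 \<and> (\<forall>x. nrm (\<phi> x - h2 x) \<le> \<epsilon> / (4 powr \<beta> - 1))"
    then show "h2 = h"
      using uniq[OF assms(3) assms(1), of h2 h \<phi> "\<epsilon> / (4 powr \<beta> - 1)"] h by blast
  qed
qed

end
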